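(* Let $p=1-\sqrt{0.5}$, $d=\log_2\log_2 t$, and $$N=\frac{d+4}{d}\,\log_2 t\,\frac{1}{h(p)-p}.$$ Let $X$ be a random binary $N\times t$ matrix whose columns are chosen independently and uniformly from the set of all binary columns of length $N$ with exactly $\lfloor pN\rfloor$ ones. Then the probability that $X$ is 2-good tends to $1$ as $t\to\infty$.
   Context: $h(x)=-x\log_2 x-(1-x)\log_2(1-x)$ is the binary entropy function. For a binary $N\times t$ matrix $X$ with columns $x(1),\dots,x(t)$ and a set $S\subseteq[t]$, let $r(X,S)=\bigvee_{j\in S}x(j)$ be the coordinatewise Boolean OR of the columns indexed by $S$. For $\mathbf{y}\in\{0,1\}^N$, $H(X,2,\mathbf{y})$ is the graph with vertex set $[t]$ whose edges are all $2$-element sets $S\subseteq[t]$ with $r(X,S)=\mathbf{y}$. The matrix $X$ is called 2-good (with respect to the parameter $p$ above) if: (1) for every $\mathbf{y}\in\{0,1\}^N$, the maximal vertex degree in $H(X,2,\mathbf{y})$ is less than $d=\log_2\log_2 t$; and (2) for every $\mathbf{y}\in\{0,1\}^N$ of weight $|\mathbf{y}|=w$, the maximal size of a matching (set of pairwise disjoint edges) in $H(X,2,\mathbf{y})$ is less than $10\max(N,t^2q)$, where $$q=\frac{\binom{w}{\lfloor pN\rfloor}\binom{\lfloor pN\rfloor}{w-\lfloor pN\rfloor}}{\binom{N}{\lfloor pN\rfloor}^2}.$$ *)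

theory Defs
  imports "HOL-Probability.Probability"
begin

(* Binary vectors in {0,1}^N are represented by their supports, i.e. subsets of {..<N}.
   A binary N x t matrix X is a function from column indices {..<t} to supports of columns. *)

definition hbin :: "real \<Rightarrow> real" where
  "hbin x = - x * log 2 x - (1 - x) * log 2 (1 - x)"

definition p0 :: real where
  "p0 = 1 - sqrt 0.5"

definition dpar :: "nat \<Rightarrow> real" where
  "dpar t = log 2 (log 2 (real t))"

definition Npar :: "nat \<Rightarrow> nat" where
  "Npar t = nat \<lceil>(dpar t + 4) / dpar t * log 2 (real t) * (1 / (hbin p0 - p0))\<rceil>"

definition rOR :: "(nat \<Rightarrow> nat set) \<Rightarrow> nat set \<Rightarrow> nat set" where
  "rOR X S = \<Union> (X ` S)"

definition edgesH :: "(nat \<Rightarrow> nat set) \<Rightarrow> nat \<Rightarrow> nat set \<Rightarrow> nat set set" where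
  "edgesH X t y = {S. S \<subseteq> {..<t} \<and> card S = 2 \<and> rOR X S = y}"

definition degH :: "(nat \<Rightarrow> nat set) \<Rightarrow> nat \<Rightarrow> nat set \<Rightarrow> nat \<Rightarrow> nat" where
  "degH X t y v = card {e \<in> edgesH X t y. v \<in> e}"

definition is_matching :: "nat set set \<Rightarrow> nat set set \<Rightarrow> bool" where
  "is_matching E M \<longleftrightarrow> M \<subseteq> E \<and> (\<forall>e\<in>M. \<forall>e'\<in>M. e \<noteq> e' \<longrightarrow> e \<inter> e' = {})"

definition qpar :: "nat \<Rightarrow> real \<Rightarrow> nat \<Rightarrow> real" where
  "qpar N p w = (let k = nat \<lfloor>p * real N\<rfloor> in
     real (w choose k) * real (k choose (w - k)) / (real (N choose k))^2)"

definition two_good :: "real \<Rightarrow> nat \<Rightarrow> nat \<Rightarrow> (nat \<Rightarrow> nat set) \<Rightarrow> bool" where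
  "two_good p N t X \<longleftrightarrow>
     (\<forall>y. y \<subseteq> {..<N} \<longrightarrow> (\<forall>v<t. real (degH X t y v) < log 2 (log 2 (real t)))) \<and>
     (\<forall>y M. y \<subseteq> {..<N} \<longrightarrow> is_matching (edgesH X t y) M \<longrightarrow>
        real (card M) < 10 * max (real N) (real t ^ 2 * qpar N p (card y)))"

definition col_pmf :: "nat \<Rightarrow> nat \<Rightarrow> nat set pmf" where
  "col_pmf N k = pmf_of_set {S. S \<subseteq> {..<N} \<and> card S = k}"

definition rand_matrix :: "real \<Rightarrow> nat \<Rightarrow> nat \<Rightarrow> (nat \<Rightarrow> nat set) pmf" where
  "rand_matrix p N t = Pi_pmf {..<t} {} (\<lambda>_. col_pmf N (nat \<lfloor>p * real N\<rfloor>))"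

end

theory Submission
  imports Defs "HOL-Real_Asymp.Real_Asymp"
begin

definition Kset :: "nat \<Rightarrow> nat \<Rightarrow> nat set set" where
  "Kset N k = {S. S \<subseteq> {..<N} \<and> card S = k}"

lemma Kset_finite: "finite (Kset N k)"
  unfolding Kset_def by (rule finite_subset[of _ "Pow {..<N}"]) auto

lemma Kset_card: "card (Kset N k) = N choose k"
  unfolding Kset_def using n_subsets[of "{..<N}" k] by simp

lemma Kset_ne: "k \<le> N \<Longrightarrow> Kset N k \<noteq> {}"
  using Kset_card[of N k] by (metis card.empty zero_less_binomial_iff less_numeral_extra(3))

lemma cond_bound:
  fixes K :: "'b set" and I L :: "'a set" and E :: "('a \<Rightarrow> 'b) set"
    and B :: "('a \<Rightarrow> 'b) \<Rightarrow> 'a \<Rightarrow> 'b set"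
  assumes fin: "finite I" and LI: "L \<subseteq> I" and fK: "finite K" and Kne: "K \<noteq> {}"
    and cov: "\<And>X. X \<in> E \<Longrightarrow> (\<And>i. i \<in> I \<Longrightarrow> X i \<in> K) \<Longrightarrow> X \<in> Pi I (B (restrict X L))"
  shows "measure_pmf.prob (Pi_pmf I d (\<lambda>_. pmf_of_set K)) E
     \<le> (\<Sum>g\<in>PiE L (\<lambda>_. K). \<Prod>i\<in>I. measure_pmf.prob (pmf_of_set K) (B g i))"
proof -
  let ?P = "Pi_pmf I d (\<lambda>_. pmf_of_set K)"
  have sp: "set_pmf ?P = PiE_dflt I d (\<lambda>_. K)"
    using fin fK Kne by (simp add: set_Pi_pmf o_def)
  have "measure_pmf.prob ?P E = measure_pmf.prob ?P (E \<inter> set_pmf ?P)"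
    by (simp add: measure_Int_set_pmf)
  also have "\<dots> \<le> measure_pmf.prob ?P (\<Union>g\<in>PiE L (\<lambda>_. K). Pi I (B g))"
  proof (rule measure_pmf.finite_measure_mono)
    show "E \<inter> set_pmf ?P \<subseteq> (\<Union>g\<in>PiE L (\<lambda>_. K). Pi I (B g))"
    proof
      fix X assume X: "X \<in> E \<inter> set_pmf ?P"
      hence XK: "\<And>i. i \<in> I \<Longrightarrow> X i \<in> K" using sp by (auto simp: PiE_dflt_def)
      have "restrict X L \<in> PiE L (\<lambda>_. K)" using XK LI by auto
      moreover have "X \<in> Pi I (B (restrict X L))" using cov X XK by blast
      ultimately show "X \<in> (\<Union>g\<in>PiE L (\<lambda>_. K). Pi I (B g))" by blast
    qed
  qed simp
  also have "\<dots> \<le> (\<Sum>g\<in>PiE L (\<lambda>_. K). measure_pmf.prob ?P (Pi I (B g)))"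
    by (rule measure_pmf.finite_measure_subadditive_finite)
       (auto intro!: finite_PiE fK finite_subset[OF LI fin])
  also have "\<dots> = (\<Sum>g\<in>PiE L (\<lambda>_. K). \<Prod>i\<in>I. measure_pmf.prob (pmf_of_set K) (B g i))"
    using fin by (simp add: measure_Pi_pmf_Pi)
  finally show ?thesis .
qed

lemma S_card:
  assumes A: "A \<in> Kset N k"
  shows "card {B \<in> Kset N k. A \<union> B = y} \<le> 2 ^ k"
proof -
  have "inj_on (\<lambda>B. B \<inter> A) {B \<in> Kset N k. A \<union> B = y}"
  proof (rule inj_onI)
    fix B B' assume "B \<in> {B \<in> Kset N k. A \<union> B = y}" "B' \<in> {B \<in> Kset N k. A \<union> B = y}"
      "B \<inter> A = B' \<inter> A"
    thus "B = B'" by blast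
  qed
  moreover have "(\<lambda>B. B \<inter> A) ` {B \<in> Kset N k. A \<union> B = y} \<subseteq> Pow A" by auto
  moreover have "finite A" using A unfolding Kset_def by (auto intro: finite_subset)
  ultimately have "card {B \<in> Kset N k. A \<union> B = y} \<le> card (Pow A)"
    by (intro card_inj_on_le) auto
  also have "\<dots> = 2 ^ k" using A \<open>finite A\<close> by (simp add: card_Pow Kset_def)
  finally show ?thesis .
qed

lemma S_card2:
  assumes A: "A \<in> Kset N k" and Ay: "A \<subseteq> y" and fy: "finite y"
  shows "card {B \<in> Kset N k. A \<union> B = y} \<le> k choose (card y - k)"
proof -
  let ?S = "{B \<in> Kset N k. A \<union> B = y}"
  have fA: "finite A" "card A = k" using A unfolding Kset_def by (auto intro: finite_subset)
  have cyA: "card (y - A) = card y - k" using Ay fA fy by (simp add: card_Diff_subset)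
  show ?thesis
  proof (cases "card y - k \<le> k")
    case False
    have "?S = {}"
    proof (rule ccontr)
      assume "?S \<noteq> {}"
      then obtain B where B: "B \<in> Kset N k" "A \<union> B = y" by auto
      have fB: "finite B" "card B = k" using B(1) unfolding Kset_def by (auto intro: finite_subset)
      have "y - A \<subseteq> B" using B by auto
      hence "card (y - A) \<le> k" using fB card_mono by metis
      thus False using False cyA by simp
    qed
    thus ?thesis by (metis card.empty zero_le)
  next
    case True
    have "inj_on (\<lambda>B. B \<inter> A) ?S"
    proof (rule inj_onI)
      fix B B' assume "B \<in> ?S" "B' \<in> ?S" "B \<inter> A = B' \<inter> A"
      thus "B = B'" by blast
    qed
    moreover have "(\<lambda>B. B \<inter> A) ` ?S \<subseteq> {T. T \<subseteq> A \<and> card T = k - (card y - k)}"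
    proof safe
      fix B assume B: "B \<in> Kset N k" "y = A \<union> B"
      have fB: "finite B" "card B = k" using B(1) unfolding Kset_def by (auto intro: finite_subset)
      have "B - A = y - A" using B by auto
      hence "card (B - A) = card y - k" using cyA by simp
      moreover have "card (B - A) + card (B \<inter> A) = card B"
        using fB by (metis Diff_Diff_Int card_Diff_subset_Int card_mono Int_lower1 Int_commute
              inf_le1 le_add_diff_inverse2 finite_Int)
      ultimately show "card (B \<inter> A) = k - (card (A \<union> B) - k)" using fB B by simp
    qed
    ultimately have "card ?S \<le> card {T. T \<subseteq> A \<and> card T = k - (card y - k)}"
      using fA by (intro card_inj_on_le) auto
    also have "\<dots> = k choose (k - (card y - k))" using fA by (simp add: n_subsets)
    also have "\<dots> = k choose (card y - k)" using True by (simp add: binomial_symmetric[symmetric])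
    finally show ?thesis .
  qed
qed

lemma pairs_card:
  assumes y: "y \<subseteq> {..<N}"
  shows "card {(A, B). A \<in> Kset N k \<and> B \<in> Kset N k \<and> A \<union> B = y}
           \<le> (card y choose k) * (k choose (card y - k))"
proof -
  have fy: "finite y" using y by (auto intro: finite_subset)
  have eq: "{(A, B). A \<in> Kset N k \<and> B \<in> Kset N k \<and> A \<union> B = y}
     = Sigma {A \<in> Kset N k. A \<subseteq> y} (\<lambda>A. {B \<in> Kset N k. A \<union> B = y})" by auto
  have "card (Sigma {A \<in> Kset N k. A \<subseteq> y} (\<lambda>A. {B \<in> Kset N k. A \<union> B = y}))
      = (\<Sum>A\<in>{A \<in> Kset N k. A \<subseteq> y}. card {B \<in> Kset N k. A \<union> B = y})"
    by (rule card_SigmaI) (auto intro: finite_subset[OF _ Kset_finite])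
  also have "\<dots> \<le> (\<Sum>A\<in>{A \<in> Kset N k. A \<subseteq> y}. k choose (card y - k))"
    by (rule sum_mono) (use S_card2 fy in auto)
  also have "\<dots> = card {A \<in> Kset N k. A \<subseteq> y} * (k choose (card y - k))" by simp
  also have "card {A \<in> Kset N k. A \<subseteq> y} = card y choose k"
  proof -
    have "{A \<in> Kset N k. A \<subseteq> y} = {A. A \<subseteq> y \<and> card A = k}"
      using y unfolding Kset_def by auto
    thus ?thesis using fy by (simp add: n_subsets)
  qed
  finally show ?thesis using eq by simp
qed

lemma edge_MinMax:
  assumes "card e = 2"
  shows "e = {Min e, Max e}" "Min e < Max e" "finite e"
proof -
  obtain a b where ab: "e = {a, b}" "a \<noteq> b" using assms by (auto simp: card_2_iff)
  thus "e = {Min e, Max e}" "Min e < Max e" "finite e"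
    by (auto simp: min_def max_def)
qed

lemma rOR_edge: "card e = 2 \<Longrightarrow> rOR X e = X (Min e) \<union> X (Max e)"
  using edge_MinMax[of e] unfolding rOR_def by (metis Union_insert ccSup_empty image_empty image_insert sup_bot.right_neutral)

lemma prob_single_K:
  assumes "A \<in> Kset N k"
  shows "measure_pmf.prob (pmf_of_set (Kset N k)) {A} = 1 / real (N choose k)"
proof -
  have ne: "Kset N k \<noteq> {}" using assms by auto
  show ?thesis using assms ne Kset_finite[of N k]
    by (simp add: measure_pmf_of_set Kset_card Int_absorb1)
qed

lemma prob_S_K:
  assumes "k \<le> N"
  shows "measure_pmf.prob (pmf_of_set (Kset N k)) {Z. A \<union> Z = y}
     = real (card {Z \<in> Kset N k. A \<union> Z = y}) / real (N choose k)"
proof -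
  have ne: "Kset N k \<noteq> {}" using assms Kset_ne by auto
  have "Kset N k \<inter> {Z. A \<union> Z = y} = {Z \<in> Kset N k. A \<union> Z = y}" by auto
  thus ?thesis using ne Kset_finite[of N k]
    by (simp add: measure_pmf_of_set Kset_card)
qed

lemma matching_prob:
  fixes M :: "nat set set"
  assumes kN: "k \<le> N"
    and Medges: "\<And>e. e \<in> M \<Longrightarrow> e \<subseteq> {..<t} \<and> card e = 2"
    and disj: "\<And>e e'. e \<in> M \<Longrightarrow> e' \<in> M \<Longrightarrow> e \<noteq> e' \<Longrightarrow> e \<inter> e' = {}"
  shows "measure_pmf.prob (Pi_pmf {..<t} {} (\<lambda>_. pmf_of_set (Kset N k))) {X. \<forall>e\<in>M. rOR X e = y}
     \<le> (real (card {(A, B). A \<in> Kset N k \<and> B \<in> Kset N k \<and> A \<union> B = y}) / (real (N choose k))^2) ^ card M"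
proof -
  define K where "K = Kset N k"
  define C where "C = real (N choose k)"
  have fK: "finite K" and Kne: "K \<noteq> {}" using kN Kset_finite Kset_ne unfolding K_def by auto
  have Cpos: "C > 0" using kN unfolding C_def by simp
  have fM: "finite M"
    using Medges by (intro finite_subset[of M "Pow {..<t}"]) auto
  define L where "L = Min ` M"
  define R where "R = Max ` M"
  have emm: "\<And>e. e \<in> M \<Longrightarrow> e = {Min e, Max e} \<and> Min e < Max e"
    using Medges edge_MinMax by blast
  have injMin: "inj_on Min M"
  proof (rule inj_onI)
    fix e e' assume "e \<in> M" "e' \<in> M" "Min e = Min e'"
    thus "e = e'" using disj[of e e'] emm[of e] emm[of e'] by blast
  qed
  have injMax: "inj_on Max M"
  proof (rule inj_onI)
    fix e e' assume "e \<in> M" "e' \<in> M" "Max e = Max e'"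
    thus "e = e'" using disj[of e e'] emm[of e] emm[of e'] by blast
  qed
  have LR: "L \<inter> R = {}"
  proof (rule ccontr)
    assume "L \<inter> R \<noteq> {}"
    then obtain e e' where ee: "e \<in> M" "e' \<in> M" "Min e = Max e'" unfolding L_def R_def by auto
    show False
    proof (cases "e = e'")
      case True thus False using ee emm[of e] by auto
    next
      case False thus False using disj[OF ee(1,2)] ee emm[of e] emm[of e'] by blast
    qed
  qed
  have LI: "L \<subseteq> {..<t}" and RI: "R \<subseteq> {..<t}"
    unfolding L_def R_def using Medges emm by blast+
  define B where "B = (\<lambda>g i. if i \<in> L then {g i :: nat set} else {Z. \<forall>e\<in>M. Max e = i \<longrightarrow> g (Min e) \<union> Z = y})"
  have step1: "measure_pmf.prob (Pi_pmf {..<t} {} (\<lambda>_. pmf_of_set K)) {X. \<forall>e\<in>M. rOR X e = y}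
     \<le> (\<Sum>g\<in>PiE L (\<lambda>_. K). \<Prod>i\<in>{..<t}. measure_pmf.prob (pmf_of_set K) (B g i))"
  proof (rule cond_bound[OF _ LI fK Kne])
    fix X assume X: "X \<in> {X. \<forall>e\<in>M. rOR X e = y}"
    show "X \<in> Pi {..<t} (B (restrict X L))"
    proof
      fix i assume "i \<in> {..<t}"
      show "X i \<in> B (restrict X L) i"
      proof (cases "i \<in> L")
        case True thus ?thesis unfolding B_def by simp
      next
        case False
        have "X (Min e) \<union> X i = y" if "e \<in> M" "Max e = i" for e
          using X that rOR_edge[of e X] Medges[of e] by auto
        moreover have "Min e \<in> L" if "e \<in> M" for e using that unfolding L_def by auto
        ultimately show ?thesis using False unfolding B_def by auto
      qed
    qed
  qed simp
  define phi where "phi = (\<lambda>A. real (card {Z \<in> K. A \<union> Z = y}) / C^2)"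
  have step2: "(\<Prod>i\<in>{..<t}. measure_pmf.prob (pmf_of_set K) (B g i)) = (\<Prod>a\<in>L. phi (g a))"
    if g: "g \<in> PiE L (\<lambda>_. K)" for g
  proof -
    let ?f = "\<lambda>i. measure_pmf.prob (pmf_of_set K) (B g i)"
    have one: "?f i = 1" if "i \<in> {..<t} - (L \<union> R)" for i
    proof -
      have "B g i = UNIV" using that unfolding B_def R_def by auto
      thus ?thesis by simp
    qed
    have "(\<Prod>i\<in>{..<t}. ?f i) = (\<Prod>i\<in>L \<union> R. ?f i)"
      using LI RI one by (intro prod.mono_neutral_right) auto
    also have "\<dots> = (\<Prod>i\<in>L. ?f i) * (\<Prod>i\<in>R. ?f i)"
      using LR fM unfolding L_def R_def by (intro prod.union_disjoint) auto
    also have "(\<Prod>i\<in>L. ?f i) = (\<Prod>e\<in>M. ?f (Min e))"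
      unfolding L_def using injMin by (simp add: prod.reindex)
    also have "(\<Prod>i\<in>R. ?f i) = (\<Prod>e\<in>M. ?f (Max e))"
      unfolding R_def using injMax by (simp add: prod.reindex)
    also have "(\<Prod>e\<in>M. ?f (Min e)) * (\<Prod>e\<in>M. ?f (Max e)) = (\<Prod>e\<in>M. ?f (Min e) * ?f (Max e))"
      by (simp add: prod.distrib)
    also have "\<dots> = (\<Prod>e\<in>M. phi (g (Min e)))"
    proof (rule prod.cong[OF refl])
      fix e assume e: "e \<in> M"
      have eL: "Min e \<in> L" using e unfolding L_def by auto
      have gK: "g (Min e) \<in> K" using g eL by auto
      have "?f (Min e) = 1 / C" using eL gK prob_single_K unfolding B_def K_def C_def by simp
      moreover have "Max e \<notin> L" using LR e unfolding R_def by auto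
      moreover have "{Z. \<forall>e'\<in>M. Max e' = Max e \<longrightarrow> g (Min e') \<union> Z = y} = {Z. g (Min e) \<union> Z = y}"
        using injMax e by (auto dest: inj_onD)
      ultimately have "?f (Min e) * ?f (Max e) = 1 / C * (real (card {Z \<in> K. g (Min e) \<union> Z = y}) / C)"
        unfolding B_def using prob_S_K[OF kN] unfolding K_def C_def by simp
      thus "?f (Min e) * ?f (Max e) = phi (g (Min e))" unfolding phi_def by (simp add: power2_eq_square)
    qed
    also have "\<dots> = (\<Prod>a\<in>L. phi (g a))"
      unfolding L_def using injMin by (simp add: prod.reindex)
    finally show ?thesis .
  qed
  have "(\<Sum>g\<in>PiE L (\<lambda>_. K). \<Prod>a\<in>L. phi (g a)) = (\<Prod>a\<in>L. \<Sum>A\<in>K. phi A)"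
    using fK fM unfolding L_def by (intro prod_sum_PiE[symmetric]) auto
  also have "\<dots> = (\<Sum>A\<in>K. phi A) ^ card M"
    using injMin unfolding L_def by (simp add: card_image)
  also have "(\<Sum>A\<in>K. phi A) = real (card {(A, B). A \<in> K \<and> B \<in> K \<and> A \<union> B = y}) / C^2"
  proof -
    have "(\<Sum>A\<in>K. phi A) = real (\<Sum>A\<in>K. card {Z \<in> K. A \<union> Z = y}) / C^2"
      unfolding phi_def by (simp add: sum_divide_distrib)
    also have "(\<Sum>A\<in>K. card {Z \<in> K. A \<union> Z = y}) = card (Sigma K (\<lambda>A. {Z \<in> K. A \<union> Z = y}))"
      using fK by (intro card_SigmaI[symmetric]) auto
    also have "Sigma K (\<lambda>A. {Z \<in> K. A \<union> Z = y}) = {(A, B). A \<in> K \<and> B \<in> K \<and> A \<union> B = y}" by auto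
    finally show ?thesis .
  qed
  finally have "(\<Sum>g\<in>PiE L (\<lambda>_. K). \<Prod>a\<in>L. phi (g a))
     = (real (card {(A, B). A \<in> K \<and> B \<in> K \<and> A \<union> B = y}) / C^2) ^ card M" .
  with step1 step2 show ?thesis unfolding K_def C_def
    by (metis (no_types, lifting) sum.cong)
qed

lemma degree_prob:
  fixes t v u0 :: nat and U :: "nat set"
  assumes kN: "k \<le> N" and v: "v < t" and u0: "u0 < t" "u0 \<noteq> v"
    and U: "U \<subseteq> {..<t}" "v \<notin> U" "u0 \<notin> U"
  shows "measure_pmf.prob (Pi_pmf {..<t} {} (\<lambda>_. pmf_of_set (Kset N k)))
           {X. \<forall>u\<in>U. X u \<union> X v = X u0 \<union> X v}
     \<le> (2 ^ k / real (N choose k)) ^ card U"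
proof -
  define K where "K = Kset N k"
  define C where "C = real (N choose k)"
  have fK: "finite K" and Kne: "K \<noteq> {}" using kN Kset_finite Kset_ne unfolding K_def by auto
  have Cpos: "C > 0" using kN unfolding C_def by simp
  have fU: "finite U" by (rule finite_subset[OF U(1)]) simp
  define L where "L = {v, u0}"
  have LI: "L \<subseteq> {..<t}" using v u0 unfolding L_def by auto
  define B where "B = (\<lambda>g i. if i = v then {g v :: nat set} else if i = u0 then {g u0}
       else if i \<in> U then {Z. g v \<union> Z = g u0 \<union> g v} else UNIV)"
  have step1: "measure_pmf.prob (Pi_pmf {..<t} {} (\<lambda>_. pmf_of_set K)) {X. \<forall>u\<in>U. X u \<union> X v = X u0 \<union> X v}
     \<le> (\<Sum>g\<in>PiE L (\<lambda>_. K). \<Prod>i\<in>{..<t}. measure_pmf.prob (pmf_of_set K) (B g i))"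
  proof (rule cond_bound[OF _ LI fK Kne])
    fix X :: "nat \<Rightarrow> nat set" assume X: "X \<in> {X. \<forall>u\<in>U. X u \<union> X v = X u0 \<union> X v}"
    show "X \<in> Pi {..<t} (B (restrict X L))"
      using X unfolding B_def L_def by (auto simp: Un_commute)
  qed simp
  have step2: "(\<Prod>i\<in>{..<t}. measure_pmf.prob (pmf_of_set K) (B g i)) \<le> (1 / C^2) * (2 ^ k / C) ^ card U"
    if g: "g \<in> PiE L (\<lambda>_. K)" for g
  proof -
    let ?f = "\<lambda>i. measure_pmf.prob (pmf_of_set K) (B g i)"
    have gv: "g v \<in> K" and gu: "g u0 \<in> K" using g unfolding L_def by auto
    have "(\<Prod>i\<in>{..<t}. ?f i) = (\<Prod>i\<in>insert v (insert u0 U). ?f i)"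
      using U v u0 by (intro prod.mono_neutral_right) (auto simp: B_def)
    also have "\<dots> = ?f v * (?f u0 * (\<Prod>i\<in>U. ?f i))"
      using fU U u0 by (simp add: prod.insert)
    also have "?f v = 1 / C" using gv prob_single_K unfolding B_def K_def C_def by simp
    also have "?f u0 = 1 / C" using gu u0 prob_single_K unfolding B_def K_def C_def by simp
    finally have eq: "(\<Prod>i\<in>{..<t}. ?f i) = 1 / C * (1 / C * (\<Prod>i\<in>U. ?f i))" .
    have "(\<Prod>i\<in>U. ?f i) \<le> (\<Prod>i\<in>U. 2 ^ k / C)"
    proof (rule prod_mono)
      fix i assume i: "i \<in> U"
      have "?f i = real (card {Z \<in> K. g v \<union> Z = g u0 \<union> g v}) / C"
        using i U prob_S_K[OF kN] unfolding B_def K_def C_def by auto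
      also have "\<dots> \<le> 2 ^ k / C"
      proof -
        have "real (card {Z \<in> K. g v \<union> Z = g u0 \<union> g v}) \<le> real (2 ^ k)"
          using S_card[of "g v" N k] gv unfolding K_def of_nat_le_iff by blast
        thus ?thesis using Cpos by (simp add: divide_right_mono)
      qed
      finally show "0 \<le> ?f i \<and> ?f i \<le> 2 ^ k / C" by simp
    qed
    thus ?thesis using eq Cpos
      by (simp add: power2_eq_square divide_right_mono)
  qed
  have "(\<Sum>g\<in>PiE L (\<lambda>_. K). \<Prod>i\<in>{..<t}. measure_pmf.prob (pmf_of_set K) (B g i))
      \<le> (\<Sum>g\<in>PiE L (\<lambda>_. K). (1 / C^2) * (2 ^ k / C) ^ card U)"
    by (rule sum_mono) (rule step2)
  also have "\<dots> = real (card (PiE L (\<lambda>_. K))) * ((1 / C^2) * (2 ^ k / C) ^ card U)" by simp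
  also have "card (PiE L (\<lambda>_. K)) = (N choose k) ^ 2"
    using u0 unfolding L_def K_def by (simp add: card_PiE Kset_card power2_eq_square)
  finally have "(\<Sum>g\<in>PiE L (\<lambda>_. K). \<Prod>i\<in>{..<t}. measure_pmf.prob (pmf_of_set K) (B g i))
      \<le> (2 ^ k / C) ^ card U" using Cpos unfolding C_def by simp
  with step1 show ?thesis unfolding K_def C_def by simp
qed

lemma rOR_pair: "rOR X {a, b} = X a \<union> X b"
  unfolding rOR_def by auto

lemma deg_nbrs:
  fixes X :: "nat \<Rightarrow> nat set" and t v :: nat
  shows "degH X t y v = card {u. u < t \<and> u \<noteq> v \<and> X v \<union> X u = y \<and> v < t}"
proof -
  let ?Nb = "{u. u < t \<and> u \<noteq> v \<and> X v \<union> X u = y \<and> v < t}"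
  have "{e \<in> edgesH X t y. v \<in> e} = (\<lambda>u. {v, u}) ` ?Nb"
  proof safe
    fix e assume e: "e \<in> edgesH X t y" "v \<in> e"
    hence c2: "card e = 2" "e \<subseteq> {..<t}" "rOR X e = y" unfolding edgesH_def by auto
    then obtain a b where ab: "e = {a, b}" "a \<noteq> b" by (auto simp: card_2_iff)
    show "e \<in> (\<lambda>u. {v, u}) ` ?Nb"
    proof (cases "a = v")
      case True
      thus ?thesis using ab c2 e rOR_pair[of X a b] by (auto intro!: image_eqI[of _ _ b])
    next
      case False
      hence "b = v" using ab e by auto
      thus ?thesis using ab c2 e False rOR_pair[of X a b] by (auto intro!: image_eqI[of _ _ a])
    qed
  next
    fix u assume u: "u < t" "u \<noteq> v" "y = X v \<union> X u" "v < t"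
    show "{v, u} \<in> edgesH X t (X v \<union> X u)" unfolding edgesH_def using u rOR_pair[of X v u] by auto
  qed
  moreover have "inj_on (\<lambda>u. {v, u}) ?Nb" by (auto simp: inj_on_def doubleton_eq_iff)
  ultimately show ?thesis unfolding degH_def by (simp add: card_image)
qed

lemma EA_bound:
  fixes t N k D :: nat
  assumes kN: "k \<le> N" and D: "D \<ge> 1"
  shows "measure_pmf.prob (Pi_pmf {..<t} {} (\<lambda>_. pmf_of_set (Kset N k)))
           {X. \<exists>y. \<exists>v<t. degH X t y v \<ge> D}
     \<le> real (t * t * (t choose (D - 1))) * (2 ^ k / real (N choose k)) ^ (D - 1)"
proof -
  let ?P = "Pi_pmf {..<t} {} (\<lambda>_. pmf_of_set (Kset N k))"
  define T where "T = {(v, u0, U). v < t \<and> u0 < t \<and> u0 \<noteq> v \<and> U \<subseteq> {..<t} \<and> v \<notin> U \<and> u0 \<notin> U \<and> card U = D - 1}"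
  define Ev where "Ev = (\<lambda>(v, u0, U). {X :: nat \<Rightarrow> nat set. \<forall>u\<in>U. X u \<union> X v = X u0 \<union> X v})"
  have TS: "T \<subseteq> {..<t} \<times> {..<t} \<times> {U. U \<subseteq> {..<t} \<and> card U = D - 1}" unfolding T_def by auto
  have fS: "finite ({..<t} \<times> {..<t} \<times> {U. U \<subseteq> {..<t} \<and> card U = D - 1})"
    by (intro finite_cartesian_product) (auto intro: finite_subset[of _ "Pow {..<t}"])
  have cS: "card ({..<t} \<times> {..<t} \<times> {U. U \<subseteq> {..<t} \<and> card U = D - 1}) = t * t * (t choose (D - 1))"
  proof -
    have "card {U. U \<subseteq> {..<t} \<and> card U = D - 1} = t choose (D - 1)"
      using n_subsets[of "{..<t}" "D - 1"] by simp
    thus ?thesis by (simp add: card_cartesian_product)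
  qed
  have fT: "finite T" by (rule finite_subset[OF TS fS])
  have cT: "card T \<le> t * t * (t choose (D - 1))" using card_mono[OF fS TS] unfolding cS .
  have sub: "{X. \<exists>y. \<exists>v<t. degH X t y v \<ge> D} \<subseteq> (\<Union>\<tau>\<in>T. Ev \<tau>)"
  proof
    fix X :: "nat \<Rightarrow> nat set" assume "X \<in> {X. \<exists>y. \<exists>v<t. degH X t y v \<ge> D}"
    then obtain y v where v: "v < t" and dg: "degH X t y v \<ge> D" by auto
    let ?Nb = "{u. u < t \<and> u \<noteq> v \<and> X v \<union> X u = y \<and> v < t}"
    have cNb: "card ?Nb \<ge> D" using dg deg_nbrs[of X t y v] by simp
    have fNb: "finite ?Nb" by (rule finite_subset[of _ "{..<t}"]) auto
    have "?Nb \<noteq> {}" using cNb D by (metis card.empty le_zero_eq not_one_le_zero)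
    then obtain u0 where u0: "u0 \<in> ?Nb" by blast
    have "card (?Nb - {u0}) \<ge> D - 1" using cNb u0 fNb by (simp add: card_Diff_singleton)
    then obtain U where U: "U \<subseteq> ?Nb - {u0}" "card U = D - 1"
      by (rule obtain_subset_with_card_n)
    have "(v, u0, U) \<in> T" unfolding T_def using U u0 v by auto
    moreover have "X \<in> Ev (v, u0, U)"
    proof -
      have "X u \<union> X v = X u0 \<union> X v" if u: "u \<in> U" for u
      proof -
        have "X v \<union> X u = y" using U u by auto
        moreover have "X v \<union> X u0 = y" using u0 by auto
        ultimately show ?thesis by blast
      qed
      thus ?thesis unfolding Ev_def by simp
    qed
    ultimately show "X \<in> (\<Union>\<tau>\<in>T. Ev \<tau>)" by blast
  qed
  have "measure_pmf.prob ?P {X. \<exists>y. \<exists>v<t. degH X t y v \<ge> D} \<le> measure_pmf.prob ?P (\<Union>\<tau>\<in>T. Ev \<tau>)"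
    using sub by (intro measure_pmf.finite_measure_mono) auto
  also have "\<dots> \<le> (\<Sum>\<tau>\<in>T. measure_pmf.prob ?P (Ev \<tau>))"
    by (rule measure_pmf.finite_measure_subadditive_finite) (use fT in auto)
  also have "\<dots> \<le> (\<Sum>\<tau>\<in>T. (2 ^ k / real (N choose k)) ^ (D - 1))"
  proof (rule sum_mono)
    fix \<tau> assume "\<tau> \<in> T"
    then obtain v u0 U where tau: "\<tau> = (v, u0, U)" "v < t" "u0 < t" "u0 \<noteq> v" "U \<subseteq> {..<t}"
      "v \<notin> U" "u0 \<notin> U" "card U = D - 1" unfolding T_def by auto
    show "measure_pmf.prob ?P (Ev \<tau>) \<le> (2 ^ k / real (N choose k)) ^ (D - 1)"
      using degree_prob[OF kN tau(2-7)] tau(1,8) unfolding Ev_def by simp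
  qed
  also have "\<dots> = real (card T) * (2 ^ k / real (N choose k)) ^ (D - 1)" by simp
  also have "\<dots> \<le> real (t * t * (t choose (D - 1))) * (2 ^ k / real (N choose k)) ^ (D - 1)"
  proof (rule mult_right_mono)
    show "real (card T) \<le> real (t * t * (t choose (D - 1)))" using cT by (simp only: of_nat_le_iff)
  qed simp
  finally show ?thesis .
qed

lemma pow_fact_le_exp:
  fixes z :: real assumes "z \<ge> 0"
  shows "z ^ m / fact m \<le> exp z"
proof -
  have s: "(\<lambda>n. z ^ n / fact n) sums exp z"
    using exp_converges[of z] by (simp add: divide_inverse mult.commute scaleR_conv_of_real)
  have "sum (\<lambda>n. z ^ n / fact n) {m} \<le> suminf (\<lambda>n. z ^ n / fact n)"
    by (rule sum_le_suminf) (use s assms in \<open>auto simp: sums_iff\<close>)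
  thus ?thesis using s by (simp add: sums_iff)
qed

lemma fact_bound:
  fixes x :: real assumes x: "x \<ge> 0" and m: "m \<ge> 1"
  shows "x ^ m / fact m \<le> (exp 1 * x / m) ^ m"
proof -
  have mpos: "real m > 0" using m by simp
  have "x ^ m / fact m = (x / m) ^ m * (real m ^ m / fact m)"
    using mpos by (simp add: power_divide)
  also have "\<dots> \<le> (x / m) ^ m * exp (real m)"
    using x mpos by (intro mult_left_mono pow_fact_le_exp) auto
  also have "exp (real m) = exp 1 ^ m" using exp_of_nat_mult[of m "1::real"] by simp
  also have "(x / m) ^ m * exp 1 ^ m = (exp 1 * x / m) ^ m"
    by (simp add: power_mult_distrib[symmetric] mult.commute)
  finally show ?thesis .
qed

lemma qpar_bound:
  fixes N :: nat and p :: real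
  assumes y: "y \<subseteq> {..<N}"
  shows "real (card {(A, B). A \<in> Kset N (nat \<lfloor>p * real N\<rfloor>) \<and> B \<in> Kset N (nat \<lfloor>p * real N\<rfloor>) \<and> A \<union> B = y})
           / (real (N choose (nat \<lfloor>p * real N\<rfloor>)))^2 \<le> qpar N p (card y)"
proof -
  let ?k = "nat \<lfloor>p * real N\<rfloor>"
  have "real (card {(A, B). A \<in> Kset N ?k \<and> B \<in> Kset N ?k \<and> A \<union> B = y})
         \<le> real ((card y choose ?k) * (?k choose (card y - ?k)))"
    using pairs_card[OF y, of ?k] unfolding of_nat_le_iff .
  thus ?thesis unfolding qpar_def Let_def
    by (intro divide_right_mono) auto
qed

lemma qpar_nonneg: "qpar N p w \<ge> 0"
  unfolding qpar_def Let_def by simp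

lemma card_P2: "card {e. e \<subseteq> {..<t} \<and> card e = 2} \<le> t ^ 2"
proof -
  have "card {e. e \<subseteq> {..<t} \<and> card e = 2} = t choose 2" using n_subsets[of "{..<t}" 2] by simp
  also have "\<dots> \<le> (t choose 2) * fact 2" by simp
  also have "\<dots> \<le> t ^ 2" by (rule binomial_fact_pow)
  finally show ?thesis .
qed

lemma EB_bound:
  fixes t N :: nat and p :: real
  assumes kN: "nat \<lfloor>p * real N\<rfloor> \<le> N" and N1: "N \<ge> 1"
  shows "measure_pmf.prob (Pi_pmf {..<t} {} (\<lambda>_. pmf_of_set (Kset N (nat \<lfloor>p * real N\<rfloor>))))
     {X. \<exists>y M. y \<subseteq> {..<N} \<and> is_matching (edgesH X t y) M \<and>
        \<not> real (card M) < 10 * max (real N) (real t ^ 2 * qpar N p (card y))}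
     \<le> 2 ^ N * (exp 1 / 10) ^ (10 * N)"
proof -
  define k where "k = nat \<lfloor>p * real N\<rfloor>"
  let ?P = "Pi_pmf {..<t} {} (\<lambda>_. pmf_of_set (Kset N k))"
  define x where "x = (\<lambda>y::nat set. real t ^ 2 * qpar N p (card y))"
  define m where "m = (\<lambda>y::nat set. nat \<lceil>10 * max (real N) (x y)\<rceil>)"
  define P2 where "P2 = {e. e \<subseteq> {..<t} \<and> card e = (2::nat)}"
  define Ms where "Ms = (\<lambda>y::nat set. {M. M \<subseteq> P2 \<and> card M = m y \<and> (\<forall>e\<in>M. \<forall>e'\<in>M. e \<noteq> e' \<longrightarrow> e \<inter> e' = {})})"
  define T where "T = Sigma (Pow {..<N}) Ms"
  define Ev where "Ev = (\<lambda>(y, M). {X :: nat \<Rightarrow> nat set. \<forall>e\<in>M. rOR X e = y})"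
  have fP2: "finite P2" unfolding P2_def by (rule finite_subset[of _ "Pow {..<t}"]) auto
  have fMs: "finite (Ms y)" for y
    by (rule finite_subset[of _ "Pow P2"]) (auto simp: Ms_def fP2)
  have fT: "finite T" unfolding T_def using fMs by (intro finite_SigmaI) auto
  have x0: "x y \<ge> 0" for y unfolding x_def using qpar_nonneg by simp
  have sub: "{X. \<exists>y M. y \<subseteq> {..<N} \<and> is_matching (edgesH X t y) M \<and>
        \<not> real (card M) < 10 * max (real N) (real t ^ 2 * qpar N p (card y))} \<subseteq> (\<Union>\<tau>\<in>T. Ev \<tau>)"
  proof
    fix X :: "nat \<Rightarrow> nat set"
    assume "X \<in> {X. \<exists>y M. y \<subseteq> {..<N} \<and> is_matching (edgesH X t y) M \<and>
        \<not> real (card M) < 10 * max (real N) (real t ^ 2 * qpar N p (card y))}"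
    then obtain y M where y: "y \<subseteq> {..<N}" and mat: "is_matching (edgesH X t y) M"
      and big: "10 * max (real N) (x y) \<le> real (card M)" unfolding x_def by auto
    have ME: "M \<subseteq> edgesH X t y" and dM: "\<forall>e\<in>M. \<forall>e'\<in>M. e \<noteq> e' \<longrightarrow> e \<inter> e' = {}"
      using mat unfolding is_matching_def by auto
    have MP2: "M \<subseteq> P2" using ME unfolding edgesH_def P2_def by auto
    have "m y \<le> card M" unfolding m_def using big by (simp add: nat_ceiling_le_eq)
    then obtain M' where M': "M' \<subseteq> M" "card M' = m y" by (rule obtain_subset_with_card_n)
    have "M' \<in> Ms y" unfolding Ms_def using M' MP2 dM by blast
    hence "(y, M') \<in> T" unfolding T_def using y by auto
    moreover have "X \<in> Ev (y, M')" unfolding Ev_def using M' ME unfolding edgesH_def by auto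
    ultimately show "X \<in> (\<Union>\<tau>\<in>T. Ev \<tau>)" by blast
  qed
  have "measure_pmf.prob ?P {X. \<exists>y M. y \<subseteq> {..<N} \<and> is_matching (edgesH X t y) M \<and>
        \<not> real (card M) < 10 * max (real N) (real t ^ 2 * qpar N p (card y))}
      \<le> measure_pmf.prob ?P (\<Union>\<tau>\<in>T. Ev \<tau>)"
    using sub by (intro measure_pmf.finite_measure_mono) auto
  also have "\<dots> \<le> (\<Sum>\<tau>\<in>T. measure_pmf.prob ?P (Ev \<tau>))"
    by (rule measure_pmf.finite_measure_subadditive_finite) (use fT in auto)
  also have "\<dots> = (\<Sum>y\<in>Pow {..<N}. \<Sum>M\<in>Ms y. measure_pmf.prob ?P (Ev (y, M)))"
    unfolding T_def using fMs by (subst sum.Sigma) auto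
  also have "\<dots> \<le> (\<Sum>y\<in>Pow {..<N}. \<Sum>M\<in>Ms y. qpar N p (card y) ^ m y)"
  proof (intro sum_mono)
    fix y M assume y: "y \<in> Pow {..<N}" and M: "M \<in> Ms y"
    have Medges: "\<And>e. e \<in> M \<Longrightarrow> e \<subseteq> {..<t} \<and> card e = 2" using M unfolding Ms_def P2_def by auto
    have disj: "\<And>e e'. e \<in> M \<Longrightarrow> e' \<in> M \<Longrightarrow> e \<noteq> e' \<Longrightarrow> e \<inter> e' = {}" using M unfolding Ms_def by auto
    have cM: "card M = m y" using M unfolding Ms_def by auto
    have "measure_pmf.prob ?P (Ev (y, M))
       \<le> (real (card {(A, B). A \<in> Kset N k \<and> B \<in> Kset N k \<and> A \<union> B = y}) / (real (N choose k))^2) ^ card M"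
      unfolding Ev_def using matching_prob[OF kN[folded k_def] Medges disj] by simp
    also have "\<dots> \<le> qpar N p (card y) ^ card M"
      using qpar_bound[of y N p] y unfolding k_def by (intro power_mono) auto
    finally show "measure_pmf.prob ?P (Ev (y, M)) \<le> qpar N p (card y) ^ m y" using cM by simp
  qed
  also have "\<dots> \<le> (\<Sum>y\<in>Pow {..<N}. (exp 1 / 10) ^ (10 * N))"
  proof (rule sum_mono)
    fix y assume y: "y \<in> Pow {..<N}"
    let ?q = "qpar N p (card y)"
    define r where "r = 10 * max (real N) (x y)"
    have r1: "real (10 * N) \<le> r" unfolding r_def by simp
    have r2: "10 * x y \<le> r" unfolding r_def by simp
    have c0: "\<lceil>r\<rceil> \<ge> 0" using r1 by (simp add: ceiling_le_zero)
    have mr: "real (m y) = of_int \<lceil>r\<rceil>" unfolding m_def r_def[symmetric] using c0 by simp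
    have m2: "real (m y) \<ge> 10 * x y" using mr r2 le_of_int_ceiling[of r] by linarith
    have "real (m y) \<ge> real (10 * N)" using mr r1 le_of_int_ceiling[of r] by linarith
    hence m1: "m y \<ge> 10 * N" by (simp only: of_nat_le_iff)
    have mpos: "m y \<ge> 1" using m1 N1 by simp
    have "(\<Sum>M\<in>Ms y. ?q ^ m y) = real (card (Ms y)) * ?q ^ m y" by simp
    also have "\<dots> \<le> ((real t ^ 2) ^ m y / fact (m y)) * ?q ^ m y"
    proof (rule mult_right_mono)
      have "Ms y \<subseteq> {M. M \<subseteq> P2 \<and> card M = m y}" unfolding Ms_def by auto
      hence "card (Ms y) \<le> card P2 choose m y"
        using card_mono[of "{M. M \<subseteq> P2 \<and> card M = m y}" "Ms y"] fP2 n_subsets[OF fP2, of "m y"]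
        by (simp add: finite_subset[of _ "Pow P2"])
      hence "card (Ms y) * fact (m y) \<le> (card P2 choose m y) * fact (m y)" by simp
      also have "\<dots> \<le> card P2 ^ m y" by (rule binomial_fact_pow)
      also have "\<dots> \<le> (t ^ 2) ^ m y" using card_P2[of t] unfolding P2_def by (intro power_mono) auto
      finally have "real (card (Ms y) * fact (m y)) \<le> real ((t ^ 2) ^ m y)" unfolding of_nat_le_iff .
      hence "real (card (Ms y)) * fact (m y) \<le> (real t ^ 2) ^ m y" by simp
      thus "real (card (Ms y)) \<le> (real t ^ 2) ^ m y / fact (m y)" by (simp add: field_simps)
    qed (simp add: qpar_nonneg)
    also have "\<dots> = x y ^ m y / fact (m y)" unfolding x_def by (simp add: power_mult_distrib)
    also have "\<dots> \<le> (exp 1 * x y / m y) ^ m y" by (rule fact_bound[OF x0 mpos])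
    also have "\<dots> \<le> (exp 1 / 10) ^ m y"
    proof (rule power_mono)
      show "exp 1 * x y / real (m y) \<le> exp 1 / 10"
        using m2 mpos x0 by (simp add: field_simps mult_left_mono)
    qed (use x0 mpos in simp)
    also have "\<dots> \<le> (exp 1 / 10) ^ (10 * N)"
    proof (rule power_decreasing[OF m1])
      show "exp 1 / 10 \<le> (1::real)" using exp_le by simp
    qed simp
    finally show "(\<Sum>M\<in>Ms y. ?q ^ m y) \<le> (exp 1 / 10) ^ (10 * N)" .
  qed
  also have "\<dots> = 2 ^ N * (exp 1 / 10) ^ (10 * N)" by (simp add: card_Pow)
  finally show ?thesis unfolding k_def .
qed

lemma binom_ratio:
  fixes p :: real and N j :: nat
  defines "T \<equiv> \<lambda>j. real (N choose j) * p ^ j * (1 - p) ^ (N - j)"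
  assumes "j < N"
  shows "T (Suc j) * (real (Suc j) * (1 - p)) = T j * (real (N - j) * p)"
proof -
  have c: "real (Suc j) * real (N choose Suc j) = real (N - j) * real (N choose j)"
  proof -
    have "Suc j * (N choose Suc j) = (N - j) * (N choose j)"
      using binomial_absorption[of j N] binomial_absorb_comp[of N j] by simp
    hence "real (Suc j * (N choose Suc j)) = real ((N - j) * (N choose j))" by (simp only:)
    thus ?thesis by (simp only: of_nat_mult)
  qed
  have e: "N - j = Suc (N - Suc j)" using assms by simp
  have e2: "(1 - p) ^ (N - j) = (1 - p) ^ (N - Suc j) * (1 - p)" using e by simp
  have "T (Suc j) * (real (Suc j) * (1 - p))
      = (real (Suc j) * real (N choose Suc j)) * (p ^ Suc j * ((1 - p) ^ (N - Suc j) * (1 - p)))"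
    unfolding T_def by (simp only: ac_simps)
  also have "\<dots> = (real (N - j) * real (N choose j)) * (p ^ Suc j * (1 - p) ^ (N - j))"
    using c e2 by simp
  also have "\<dots> = T j * (real (N - j) * p)"
    unfolding T_def by (simp add: ac_simps)
  finally show ?thesis .
qed

lemma binom_lower:
  fixes p :: real and N :: nat
  assumes p0: "0 < p" and p1: "p < 1/2"
  defines "k \<equiv> nat \<lfloor>p * real N\<rfloor>"
  shows "1 \<le> 2 * (real N + 1) * (real (N choose k) * p ^ k * (1 - p) ^ (N - k))"
proof -
  define T where "T = (\<lambda>j. real (N choose j) * p ^ j * (1 - p) ^ (N - j))"
  have T0: "T j \<ge> 0" for j unfolding T_def using p0 p1 by simp
  have kle: "real k \<le> p * real N" unfolding k_def using p0 by simp
  have fl: "\<lfloor>p * real N\<rfloor> \<ge> 0" using p0 by simp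
  have kr: "real k = of_int \<lfloor>p * real N\<rfloor>" unfolding k_def using fl by simp
  have kgt: "p * real N < real k + 1" unfolding kr using real_of_int_floor_add_one_gt[of "p * real N"] by simp
  have ratio: "T (Suc j) * (real (Suc j) * (1 - p)) = T j * (real (N - j) * p)" if "j < N" for j
    using binom_ratio[OF that, of p] unfolding T_def by simp
  have up: "T j \<le> T (Suc j)" if "Suc j \<le> k" for j
  proof -
    have jN: "j < N"
    proof -
      have "p * real N \<le> real N" using mult_left_le_one_le[of "real N" p] p0 p1 by simp
      hence "real k \<le> real N" using kle by linarith
      thus ?thesis using that by simp
    qed
    have "real (Suc j) * (1 - p) \<le> real (N - j) * p"
    proof -
      have "real (N - j) = real N - real j" using jN by simp
      moreover have "real (Suc j) \<le> p * real N" using that kle by simp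
      ultimately show ?thesis using p0 by (simp add: algebra_simps)
    qed
    hence "T j * (real (Suc j) * (1 - p)) \<le> T j * (real (N - j) * p)"
      using T0 by (intro mult_left_mono) auto
    also have "\<dots> = T (Suc j) * (real (Suc j) * (1 - p))" using ratio[OF jN] by simp
    finally show ?thesis using p1 by (simp add: mult_le_cancel_right)
  qed
  have down: "T (Suc j) \<le> T j" if "Suc k \<le> j" for j
  proof (cases "j < N")
    case False
    hence "T (Suc j) = 0" unfolding T_def by simp
    thus ?thesis using T0 by simp
  next
    case jN: True
    have "real (N - j) * p \<le> real (Suc j) * (1 - p)"
    proof -
      have "real (N - j) = real N - real j" using jN by simp
      moreover have "real j \<ge> real k + 1" using that by simp
      ultimately show ?thesis using p0 p1 kgt by (simp add: algebra_simps)
    qed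
    hence "T j * (real (N - j) * p) \<le> T j * (real (Suc j) * (1 - p))"
      using T0 by (intro mult_left_mono) auto
    hence "T (Suc j) * (real (Suc j) * (1 - p)) \<le> T j * (real (Suc j) * (1 - p))"
      using ratio[OF jN] by simp
    thus ?thesis using p1 by (simp add: mult_le_cancel_right)
  qed
  have upk: "T j \<le> T k" if "j \<le> k" for j
    using that
  proof (induction j rule: inc_induct)
    case base thus ?case by simp
  next
    case (step n) thus ?case using up[of n] by simp
  qed
  have downk: "T j \<le> T (Suc k)" if "Suc k \<le> j" for j
    using that
  proof (induction j rule: dec_induct)
    case base thus ?case by simp
  next
    case (step n) thus ?case using down[of n] by simp
  qed
  have k1: "T (Suc k) \<le> 2 * T k"
  proof (cases "k < N")
    case False
    hence "T (Suc k) = 0" unfolding T_def by simp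
    thus ?thesis using T0[of k] by simp
  next
    case kN: True
    have "real (N - k) * p \<le> 2 * (real (Suc k) * (1 - p))"
    proof -
      have "real (N - k) \<le> real N" by simp
      hence "real (N - k) * p \<le> real N * p" using p0 by (simp add: mult_right_mono)
      also have "\<dots> \<le> 2 * (real (Suc k) * (1 - p))"
      proof -
        have a: "real (Suc k) \<le> 2 * (real (Suc k) * (1 - p))"
          using mult_left_mono[of 1 "2*(1-p)" "real (Suc k)"] p1 by simp
        have "real N * p < real (Suc k)" using kgt by (simp add: mult.commute)
        thus ?thesis using a by linarith
      qed
      finally show ?thesis .
    qed
    hence "T k * (real (N - k) * p) \<le> T k * (2 * (real (Suc k) * (1 - p)))"
      using T0 by (intro mult_left_mono) auto
    hence "T (Suc k) * (real (Suc k) * (1 - p)) \<le> (2 * T k) * (real (Suc k) * (1 - p))"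
      using ratio[OF kN] by (simp add: algebra_simps)
    thus ?thesis using p1 by (simp add: mult_le_cancel_right)
  qed
  have all: "T j \<le> 2 * T k" for j
  proof (cases "j \<le> k")
    case True thus ?thesis using upk[OF True] T0[of k] by simp
  next
    case False thus ?thesis using downk[of j] k1 by simp
  qed
  have "1 = (p + (1 - p)) ^ N" by simp
  also have "\<dots> = (\<Sum>j\<le>N. T j)" unfolding T_def by (rule binomial_ring)
  also have "\<dots> \<le> (\<Sum>j\<le>N. 2 * T k)" by (rule sum_mono) (rule all)
  also have "\<dots> = 2 * (real N + 1) * T k" by simp
  finally show ?thesis unfolding T_def .
qed

definition sq :: real where "sq = sqrt 0.5"
definition c0 :: real where "c0 = hbin p0 - p0"

lemma sq_facts: "sq > 0" "sq ^ 2 = 1/2" "2/3 < sq" "sq < 4/5" "p0 = 1 - sq"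
proof -
  show "sq > 0" unfolding sq_def by simp
  show sq2: "sq ^ 2 = 1/2" unfolding sq_def by simp
  show "2/3 < sq" unfolding sq_def by (rule real_less_rsqrt) (simp add: power2_eq_square)
  have "sqrt 0.5 < sqrt ((4/5)^2)" by (subst real_sqrt_less_iff) (simp add: power2_eq_square)
  thus "sq < 4/5" unfolding sq_def by simp
  show "p0 = 1 - sq" unfolding p0_def sq_def ..
qed

lemma p0_facts: "0 < p0" "p0 < 1/2" "p0 \<le> sq / 2" "2 * p0 \<le> sq" "sq \<le> 4 * p0" "p0 < 1"
  using sq_facts by auto

lemma ln_sq: "ln sq = - ln 2 / 2"
proof -
  have "ln (sq ^ 2) = 2 * ln sq" using sq_facts(1) by (simp add: ln_realpow)
  moreover have "ln (sq ^ 2) = - ln 2"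
  proof -
    have "ln (sq ^ 2) = ln (1/2)" by (simp only: sq_facts(2))
    also have "\<dots> = - ln 2" by (simp add: ln_div)
    finally show ?thesis .
  qed
  ultimately show ?thesis by simp
qed

lemma hbin_ln: "hbin p0 * ln 2 = - p0 * ln p0 - sq * ln sq"
proof -
  have e: "1 - p0 = sq" using sq_facts(5) by simp
  show ?thesis unfolding hbin_def log_def e by (simp add: field_simps)
qed

lemma c0_ln: "c0 * ln 2 = - (p0 * ln (2 * p0) + sq * ln sq)"
  unfolding c0_def using hbin_ln p0_facts(1) by (simp add: ln_mult algebra_simps)

lemma c0_lower: "c0 \<ge> 1/2"
proof -
  have "ln p0 \<le> ln (sq / 2)" using p0_facts by simp
  also have "\<dots> = - 3/2 * ln 2" using ln_sq sq_facts(1) by (simp add: ln_div)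
  finally have lp: "ln p0 \<le> - 3/2 * ln 2" .
  have "p0 * ln p0 \<le> p0 * (- 3/2 * ln 2)" using mult_left_mono[OF lp] p0_facts(1) by simp
  hence "- p0 * ln p0 \<ge> p0 * (3/2 * ln 2)" by simp
  hence "hbin p0 * ln 2 \<ge> (3/2 * p0 + sq / 2) * ln 2" unfolding hbin_ln ln_sq by (simp add: algebra_simps)
  hence "hbin p0 \<ge> 3/2 * p0 + sq / 2" by simp
  thus ?thesis unfolding c0_def using sq_facts(5) by simp
qed

lemma c0_upper: "c0 \<le> 2"
proof -
  have l1: "- ln p0 \<le> 1 / p0 - 1"
    using ln_le_minus_one[of "1 / p0"] p0_facts by (simp add: ln_div)
  hence "p0 * (- ln p0) \<le> p0 * (1 / p0 - 1)" using p0_facts(1) by (intro mult_left_mono) auto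
  hence "- p0 * ln p0 \<le> p0 * (1 / p0 - 1)" by simp
  moreover have "p0 * (1 / p0 - 1) = 1 - p0" using p0_facts(1) by (simp add: field_simps)
  ultimately have a: "- p0 * ln p0 \<le> 1 - p0" by simp
  have l2: "ln 2 \<ge> (1/2::real)" using ln_le_minus_one[of "1/2"] by (simp add: ln_div)
  have "hbin p0 * ln 2 \<le> (1 - p0) + sq * (ln 2 / 2)" unfolding hbin_ln ln_sq using a by simp
  also have "\<dots> \<le> 2 * (1 - p0) * ln 2 + sq / 2 * ln 2"
  proof -
    have "(1 - p0) * 1 \<le> (1 - p0) * (2 * ln 2)" using l2 p0_facts by (intro mult_left_mono) auto
    thus ?thesis by (simp add: algebra_simps)
  qed
  finally have "hbin p0 * ln 2 \<le> (2 * (1 - p0) + sq / 2) * ln 2" by (simp add: algebra_simps)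
  hence "hbin p0 \<le> 2 * (1 - p0) + sq / 2" by simp
  thus ?thesis unfolding c0_def using sq_facts by simp
qed

lemma pow_exp: "x > 0 \<Longrightarrow> x ^ n = exp (real n * ln x)"
  by (simp add: exp_of_nat_mult)

lemma key_exp:
  fixes N :: nat
  defines "k \<equiv> nat \<lfloor>p0 * real N\<rfloor>"
  shows "(2 * p0) ^ k * sq ^ (N - k) \<le> 2 * exp (- (real N * c0 * ln 2))"
proof -
  define a where "a = ln (2 * p0)"
  define b where "b = ln sq"
  have fl: "\<lfloor>p0 * real N\<rfloor> \<ge> 0" using p0_facts by simp
  have kr: "real k = of_int \<lfloor>p0 * real N\<rfloor>" unfolding k_def using fl by simp
  have kle: "real k \<le> p0 * real N" unfolding kr by simp
  have kgt: "p0 * real N < real k + 1" unfolding kr using real_of_int_floor_add_one_gt[of "p0 * real N"] by simp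
  have kN: "real k \<le> real N" using kle p0_facts mult_left_le_one_le[of "real N" p0] by simp
  hence kN': "k \<le> N" by simp
  have e1: "(2 * p0) ^ k = exp (real k * a)" unfolding a_def by (rule pow_exp) (use p0_facts in simp)
  have e2: "sq ^ (N - k) = exp (real (N - k) * b)" unfolding b_def by (rule pow_exp) (use sq_facts in simp)
  have "(2 * p0) ^ k * sq ^ (N - k) = exp (real k * a) * exp (real (N - k) * b)"
    unfolding e1 e2 ..
  also have "\<dots> = exp (real k * a + real (N - k) * b)" by (simp add: exp_add)
  also have "real k * a + real (N - k) * b = real N * (p0 * a + sq * b) + (p0 * real N - real k) * (b - a)"
  proof -
    have sqe: "sq = 1 - p0" using sq_facts(5) by simp
    show ?thesis using kN' unfolding sqe by (simp add: algebra_simps of_nat_diff)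
  qed
  also have "real N * (p0 * a + sq * b) = - (real N * c0 * ln 2)"
  proof -
    have "real N * (c0 * ln 2) = real N * (- (p0 * a + sq * b))" unfolding a_def b_def c0_ln ..
    thus ?thesis by (simp add: algebra_simps)
  qed
  also have "(p0 * real N - real k) * (b - a) \<le> 1 * ln 2"
  proof (rule mult_mono)
    show "p0 * real N - real k \<le> 1" using kgt by simp
    have "b - a = ln (sq / (2 * p0))" unfolding a_def b_def using p0_facts sq_facts by (simp add: ln_div)
    also have "\<dots> \<le> ln 2" using p0_facts sq_facts by (simp add: field_simps)
    finally show "b - a \<le> ln 2" .
    have "ln (2 * p0) \<le> ln sq" using p0_facts sq_facts by simp
    thus "0 \<le> b - a" unfolding a_def b_def by simp
  qed (use kle in simp)
  finally have "(2 * p0) ^ k * sq ^ (N - k) \<le> exp (- (real N * c0 * ln 2) + ln 2)" by simp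
  also have "\<dots> = exp (- (real N * c0 * ln 2)) * exp (ln 2)" by (simp only: exp_add)
  also have "\<dots> = 2 * exp (- (real N * c0 * ln 2))" by simp
  finally show ?thesis .
qed

lemma r_bound:
  fixes N :: nat
  defines "k \<equiv> nat \<lfloor>p0 * real N\<rfloor>"
  shows "2 ^ k / real (N choose k) \<le> 4 * (real N + 1) * exp (- (real N * c0 * ln 2))"
proof -
  have kN: "k \<le> N"
  proof -
    have "real k \<le> p0 * real N" unfolding k_def using p0_facts by simp
    hence "real k \<le> real N" using p0_facts mult_left_le_one_le[of "real N" p0] by simp
    thus ?thesis by simp
  qed
  have Cpos: "real (N choose k) > 0" using kN by simp
  have L: "1 \<le> 2 * (real N + 1) * (real (N choose k) * p0 ^ k * sq ^ (N - k))"
  proof -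
    have e: "1 - p0 = sq" using sq_facts(5) by simp
    show ?thesis using binom_lower[OF p0_facts(1,2), of N, unfolded e] unfolding k_def .
  qed
  have "2 ^ k / real (N choose k) \<le> 2 ^ k * (2 * (real N + 1) * (p0 ^ k * sq ^ (N - k)))"
  proof -
    have "1 / real (N choose k) \<le> 2 * (real N + 1) * (p0 ^ k * sq ^ (N - k))"
      using L Cpos by (simp add: divide_le_eq algebra_simps)
    hence "2 ^ k * (1 / real (N choose k)) \<le> 2 ^ k * (2 * (real N + 1) * (p0 ^ k * sq ^ (N - k)))"
      by (intro mult_left_mono) auto
    thus ?thesis by simp
  qed
  also have "\<dots> = 2 * (real N + 1) * ((2 * p0) ^ k * sq ^ (N - k))"
    by (simp add: power_mult_distrib algebra_simps)
  also have "\<dots> \<le> 2 * (real N + 1) * (2 * exp (- (real N * c0 * ln 2)))"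
    using key_exp[of N] unfolding k_def by (intro mult_left_mono) auto
  finally show ?thesis by (simp add: algebra_simps)
qed

lemma log2_ge:
  fixes x :: real and n :: nat
  assumes "x \<ge> 2 ^ n"
  shows "log 2 x \<ge> n"
proof -
  have "log 2 (2 ^ n) = real n" by (simp add: log_nat_power)
  have xp: "x > 0" using assms by (rule less_le_trans[rotated]) simp
  moreover have "log 2 (2 ^ n) \<le> log 2 x" using assms xp by (subst log_le_cancel_iff) auto
  ultimately show ?thesis by simp
qed

lemma choose_le_pow: "n choose j \<le> n ^ j"
proof -
  have "n choose j \<le> (n choose j) * fact j" by simp
  also have "\<dots> \<le> n ^ j" by (rule binomial_fact_pow)
  finally show ?thesis .
qed

lemma bad_bound:
  fixes t :: nat
  assumes t: "real t \<ge> 2 ^ 16"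
  shows "measure_pmf.prob (rand_matrix p0 (Npar t) t) {X. \<not> two_good p0 (Npar t) t X}
     \<le> exp (- ln (real t) + dpar t * ln (24 * log 2 (real t))) + exp (- ln (real t) / 2)"
proof -
  define u where "u = ln (real t)"
  define Lt where "Lt = log 2 (real t)"
  define d where "d = dpar t"
  define N where "N = Npar t"
  define k where "k = nat \<lfloor>p0 * real N\<rfloor>"
  define D where "D = nat \<lceil>d\<rceil>"
  define E where "E = (d + 4) / d * Lt * (1 / c0)"
  have tpos: "real t > 0" using t by (smt (verit) zero_less_power)
  have Lt16: "Lt \<ge> 16" unfolding Lt_def using log2_ge[of 16 "real t"] t by simp
  have d4: "d \<ge> 4" unfolding d_def dpar_def Lt_def[symmetric] using log2_ge[of 4 Lt] Lt16 by simp
  have uLt: "u = Lt * ln 2" unfolding u_def Lt_def log_def by simp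
  have c0pos: "c0 > 0" using c0_lower by simp
  have NE: "N = nat \<lceil>E\<rceil>" unfolding N_def Npar_def E_def d_def c0_def Lt_def ..
  have Epos: "E > 0" unfolding E_def using d4 Lt16 c0pos by simp
  have N_ge: "real N \<ge> E" unfolding NE using Epos by linarith
  have N_le: "real N \<le> E + 1" unfolding NE using Epos by linarith
  have dd: "(d + 4) / d \<le> 2" using d4 by (simp add: divide_le_eq)
  have dd1: "(d + 4) / d \<ge> 1" using d4 by (simp add: le_divide_eq)
  have ic0: "1 / c0 \<le> 2" using c0_lower by (simp add: divide_le_eq)
  have ic0': "1 / c0 \<ge> 1 / 2" using c0_upper c0pos by (simp add: le_divide_eq)
  have E_le: "E \<le> 4 * Lt"
  proof -
    have "E \<le> 2 * Lt * 2" unfolding E_def using dd ic0 Lt16 c0pos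
      by (intro mult_mono) auto
    thus ?thesis by simp
  qed
  have E_ge: "E \<ge> Lt / 2"
  proof -
    have "1 * Lt * (1 / 2) \<le> E" unfolding E_def using dd1 ic0' Lt16 d4
      by (intro mult_mono) auto
    thus ?thesis by simp
  qed
  have Nc0: "real N * c0 \<ge> (d + 4) / d * Lt"
  proof -
    have "E * c0 \<le> real N * c0" using N_ge c0pos by (simp add: mult_right_mono)
    moreover have "E * c0 = (d + 4) / d * Lt" unfolding E_def using c0pos by simp
    ultimately show ?thesis by simp
  qed
  have N1: "N \<ge> 1" using N_ge E_ge Lt16 by simp
  have kN: "k \<le> N"
  proof -
    have "real k \<le> p0 * real N" unfolding k_def using p0_facts by simp
    hence "real k \<le> real N" using p0_facts mult_left_le_one_le[of "real N" p0] by simp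
    thus ?thesis by simp
  qed
  have Dd: "real D \<ge> d" "real D < d + 1" unfolding D_def using d4 by linarith+
  have D1: "D \<ge> 1" using Dd d4 by simp
  have rm: "rand_matrix p0 N t = Pi_pmf {..<t} {} (\<lambda>_. pmf_of_set (Kset N k))"
    unfolding rand_matrix_def col_pmf_def Kset_def k_def ..
  let ?P = "Pi_pmf {..<t} {} (\<lambda>_. pmf_of_set (Kset N k))"
  define EA where "EA = {X. \<exists>y. \<exists>v<t. degH X t y v \<ge> D}"
  define EB where "EB = {X. \<exists>y M. y \<subseteq> {..<N} \<and> is_matching (edgesH X t y) M \<and>
        \<not> real (card M) < 10 * max (real N) (real t ^ 2 * qpar N p0 (card y))}"
  have sub: "{X. \<not> two_good p0 N t X} \<subseteq> EA \<union> EB"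
  proof
    fix X assume "X \<in> {X. \<not> two_good p0 N t X}"
    hence ng: "\<not> two_good p0 N t X" by simp
    show "X \<in> EA \<union> EB"
    proof (cases "\<forall>y. y \<subseteq> {..<N} \<longrightarrow> (\<forall>v<t. real (degH X t y v) < log 2 (log 2 (real t)))")
      case True
      hence "X \<in> EB" using ng unfolding two_good_def EB_def by blast
      thus ?thesis by simp
    next
      case False
      then obtain y v where v: "v < t" and dg: "\<not> real (degH X t y v) < d"
        unfolding d_def dpar_def by auto
      have "D \<le> degH X t y v" unfolding D_def using dg by (simp add: nat_le_iff ceiling_le_iff)
      hence "X \<in> EA" unfolding EA_def using v by auto
      thus ?thesis by simp
    qed
  qed
  have "measure_pmf.prob ?P {X. \<not> two_good p0 N t X} \<le> measure_pmf.prob ?P (EA \<union> EB)"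
    using sub by (intro measure_pmf.finite_measure_mono) auto
  also have "\<dots> \<le> measure_pmf.prob ?P EA + measure_pmf.prob ?P EB"
    by (rule measure_Un_le) auto
  finally have split: "measure_pmf.prob ?P {X. \<not> two_good p0 N t X} \<le> measure_pmf.prob ?P EA + measure_pmf.prob ?P EB" .
  have PB: "measure_pmf.prob ?P EB \<le> exp (- u / 2)"
  proof -
    have "measure_pmf.prob ?P EB \<le> 2 ^ N * (exp 1 / 10) ^ (10 * N)"
      unfolding EB_def k_def using EB_bound[of p0 N t] kN N1 unfolding k_def by simp
    also have "\<dots> = (2 * (exp 1 / 10) ^ 10) ^ N" by (simp add: power_mult power_mult_distrib)
    also have "\<dots> \<le> (1 / 2) ^ N"
    proof (rule power_mono)
      have h1: "(exp 1 / 10) ^ 10 \<le> (3 / 10 :: real) ^ 10"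
        using exp_le by (intro power_mono) auto
      have h2: "(3 / 10 :: real) ^ 10 \<le> 1 / 4" by (simp add: power_divide)
      show "2 * (exp 1 / 10) ^ 10 \<le> (1 / 2 :: real)" using h1 h2 by linarith
    qed simp
    also have "\<dots> = exp (- (real N * ln 2))"
    proof -
      have "(1 / 2 :: real) ^ N = exp (real N * ln (1 / 2))" by (rule pow_exp) simp
      thus ?thesis by (simp add: ln_div)
    qed
    also have "\<dots> \<le> exp (- (Lt / 2 * ln 2))"
      using N_ge E_ge by (simp add: mult_right_mono)
    also have "- (Lt / 2 * ln 2) = - u / 2" unfolding uLt by simp
    finally show ?thesis .
  qed
  define G where "G = 24 * Lt"
  have Gpos: "G \<ge> 1" unfolding G_def using Lt16 by simp
  define r where "r = 2 ^ k / real (N choose k)"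
  have r0: "r \<ge> 0" unfolding r_def by simp
  have r_le: "r \<le> G * exp (- ((1 + 4 / d) * u))"
  proof -
    have "r \<le> 4 * (real N + 1) * exp (- (real N * c0 * ln 2))" unfolding r_def k_def by (rule r_bound)
    also have "\<dots> \<le> G * exp (- ((1 + 4 / d) * u))"
    proof (rule mult_mono)
      show "4 * (real N + 1) \<le> G" unfolding G_def using N_le E_le Lt16 by simp
      have "(1 + 4 / d) * u = ((d + 4) / d * Lt) * ln 2" unfolding uLt using d4 by (simp add: field_simps)
      also have "\<dots> \<le> real N * c0 * ln 2" using mult_right_mono[OF Nc0, of "ln 2"] by simp
      finally show "exp (- (real N * c0 * ln 2)) \<le> exp (- ((1 + 4 / d) * u))" by simp
    qed (use Gpos in auto)
    finally show ?thesis .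
  qed
  have PA: "measure_pmf.prob ?P EA \<le> exp (- u + d * ln G)"
  proof -
    have "measure_pmf.prob ?P EA \<le> real (t * t * (t choose (D - 1))) * r ^ (D - 1)"
      unfolding EA_def r_def using EA_bound[OF kN D1, of t] by simp
    also have "\<dots> \<le> real t ^ (D + 1) * (G * exp (- ((1 + 4 / d) * u))) ^ (D - 1)"
    proof (rule mult_mono)
      have "t * t * (t choose (D - 1)) \<le> t * t * t ^ (D - 1)" using choose_le_pow by simp
      also have "\<dots> = t ^ (D + 1)"
      proof -
        have e: "D + 1 = (D - 1) + 2" using D1 by simp
        show ?thesis unfolding e power_add by (simp add: power2_eq_square algebra_simps)
      qed
      finally have X: "t * t * (t choose (D - 1)) \<le> t ^ (D + 1)" .
      have "real (t * t * (t choose (D - 1))) \<le> real (t ^ (D + 1))" using X by (simp only: of_nat_le_iff)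
      thus "real (t * t * (t choose (D - 1))) \<le> real t ^ (D + 1)" by simp
      show "r ^ (D - 1) \<le> (G * exp (- ((1 + 4 / d) * u))) ^ (D - 1)" using r0 r_le by (intro power_mono)
    qed (use r0 in auto)
    also have "\<dots> = exp (real (D + 1) * u) * exp (real (D - 1) * (ln G - (1 + 4 / d) * u))"
    proof -
      have a: "real t ^ (D + 1) = exp (real (D + 1) * u)" unfolding u_def using tpos by (rule pow_exp)
      have b: "G * exp (- ((1 + 4 / d) * u)) = exp (ln G - (1 + 4 / d) * u)"
      proof -
        have "exp (ln G - (1 + 4 / d) * u) = exp (ln G) * exp (- ((1 + 4 / d) * u))"
          by (simp only: diff_conv_add_uminus exp_add)
        thus ?thesis using Gpos by simp
      qed
      have c: "(exp (ln G - (1 + 4 / d) * u)) ^ (D - 1) = exp (real (D - 1) * (ln G - (1 + 4 / d) * u))"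
        by (rule pow_exp[THEN trans]) auto
      show ?thesis using a b c by simp
    qed
    also have "\<dots> = exp (real (D + 1) * u + real (D - 1) * (ln G - (1 + 4 / d) * u))"
      by (simp add: exp_add)
    also have "\<dots> \<le> exp (- u + d * ln G)"
    proof -
      have u0: "u \<ge> 0" unfolding uLt using Lt16 by simp
      have lG: "ln G \<ge> 0" using Gpos by simp
      have Dm: "real (D - 1) = real D - 1" "real (D + 1) = real D + 1" using D1 by auto
      have "real (D - 1) * ln G \<le> d * ln G" using Dm Dd lG by (intro mult_right_mono) auto
      moreover have "(real D + 1) - (real D - 1) * (1 + 4 / d) \<le> -1"
      proof -
        have "3 * d \<le> 4 * (real D - 1)" using Dd(1) d4 by (simp add: algebra_simps)
        hence "3 \<le> 4 * (real D - 1) / d" using d4 by (simp add: le_divide_eq)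
        thus ?thesis using d4 by (simp add: algebra_simps)
      qed
      hence "((real D + 1) - (real D - 1) * (1 + 4 / d)) * u \<le> -1 * u" using u0 by (intro mult_right_mono) auto
      ultimately have "real (D + 1) * u + real (D - 1) * (ln G - (1 + 4 / d) * u) \<le> - u + d * ln G"
        unfolding Dm by (simp add: algebra_simps)
      thus ?thesis by simp
    qed
    finally show ?thesis .
  qed
  have "measure_pmf.prob (rand_matrix p0 (Npar t) t) {X. \<not> two_good p0 (Npar t) t X}
      \<le> exp (- u + d * ln G) + exp (- u / 2)"
    using split PA PB unfolding rm[folded N_def] N_def[symmetric] by simp
  thus ?thesis unfolding u_def d_def G_def Lt_def .
qed

theorem lemma1:
  shows "(\<lambda>t. measure_pmf.prob (rand_matrix p0 (Npar t) t) {X. two_good p0 (Npar t) t X})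
           \<longlonglongrightarrow> 1"
proof -
  define h where "h = (\<lambda>x::real. exp (- ln x + (ln (ln x / ln 2) / ln 2) * ln (24 * (ln x / ln 2))) + exp (- ln x / 2))"
  have lim_h: "(h \<longlongrightarrow> 0) at_top" unfolding h_def by real_asymp
  have lim_seq: "(\<lambda>t. h (real t)) \<longlonglongrightarrow> 0"
    by (rule filterlim_compose[OF lim_h filterlim_real_sequentially])
  have lim1: "(\<lambda>t. 1 - h (real t)) \<longlonglongrightarrow> 1"
    using tendsto_diff[OF tendsto_const[of 1] lim_seq] by simp
  have ev1: "\<forall>\<^sub>F t in sequentially. 1 - h (real t)
      \<le> measure_pmf.prob (rand_matrix p0 (Npar t) t) {X. two_good p0 (Npar t) t X}"
  proof (rule eventually_sequentiallyI[of "2 ^ 16"])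
    fix t :: nat assume t: "2 ^ 16 \<le> t"
    have tr: "real t \<ge> 2 ^ 16"
    proof -
      have "real (2 ^ 16 :: nat) \<le> real t" using t by (simp only: of_nat_le_iff)
      thus ?thesis by simp
    qed
    let ?M = "rand_matrix p0 (Npar t) t"
    have "measure_pmf.prob ?M {X. \<not> two_good p0 (Npar t) t X}
       \<le> exp (- ln (real t) + dpar t * ln (24 * log 2 (real t))) + exp (- ln (real t) / 2)"
      by (rule bad_bound[OF tr])
    also have "\<dots> = h (real t)" unfolding h_def dpar_def log_def ..
    finally have bad: "measure_pmf.prob ?M {X. \<not> two_good p0 (Npar t) t X} \<le> h (real t)" .
    have "measure_pmf.prob ?M {X. two_good p0 (Npar t) t X}
        = measure_pmf.prob ?M (space (measure_pmf ?M) - {X. \<not> two_good p0 (Npar t) t X})"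
      by (intro arg_cong[where f = "measure_pmf.prob ?M"]) auto
    also have "\<dots> = 1 - measure_pmf.prob ?M {X. \<not> two_good p0 (Npar t) t X}"
      by (rule measure_pmf.prob_compl) simp
    finally show "1 - h (real t) \<le> measure_pmf.prob ?M {X. two_good p0 (Npar t) t X}"
      using bad by simp
  qed
  have ev2: "\<forall>\<^sub>F t in sequentially.
      measure_pmf.prob (rand_matrix p0 (Npar t) t) {X. two_good p0 (Npar t) t X} \<le> 1"
    by (simp add: measure_pmf.prob_le_1)
  show ?thesis by (rule tendsto_sandwich[OF ev1 ev2 lim1 tendsto_const])
qed


end
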